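(* Let $\Delta$ be a positive integer and suppose there exists a constant $0<c_{\Delta}<1$ such that $\mathrm{es}_{\Delta}(H)\leq c_{\Delta}|V(H)|$ holds for every $\Delta$-regular finite simple graph $H$. Then $\mathrm{es}_{\Delta}(G)\leq c_{\Delta}|V(G)|$ holds for every finite simple graph $G$ with $\Delta(G)=\Delta$.
   Context: For a graph $G$ with at least one edge, $\mathrm{es}_{\Delta}(G)$ denotes the $\Delta$-edge stability number: the minimum number of edges of $G$ whose removal results in a subgraph with maximum degree $\Delta(G)-1$. *)

theory Defs
  imports Complex_Main
begin

definition fin_simple_graph :: "'a set \<Rightarrow> 'a set set \<Rightarrow> bool" where
  "fin_simple_graph V E \<longleftrightarrow> finite V \<and> (\<forall>e\<in>E. e \<subseteq> V \<and> card e = 2)"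

definition degree :: "'a set set \<Rightarrow> 'a \<Rightarrow> nat" where
  "degree E v = card {e\<in>E. v \<in> e}"

definition max_degree :: "'a set \<Rightarrow> 'a set set \<Rightarrow> nat" where
  "max_degree V E = (if V = {} then 0 else Max (degree E ` V))"

definition regular :: "nat \<Rightarrow> 'a set \<Rightarrow> 'a set set \<Rightarrow> bool" where
  "regular d V E \<longleftrightarrow> (\<forall>v\<in>V. degree E v = d)"

definition es_Delta :: "'a set \<Rightarrow> 'a set set \<Rightarrow> nat" where
  "es_Delta V E = (LEAST k. \<exists>F. F \<subseteq> E \<and> card F = k \<and>
       max_degree V (E - F) = max_degree V E - 1)"

end

theory Submission
  imports Defs
begin


definition covers :: "'a set \<Rightarrow> 'a set set \<Rightarrow> 'a set set \<Rightarrow> bool" where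
  "covers V E F \<longleftrightarrow> F \<subseteq> E \<and> (\<forall>v\<in>V. degree E v = max_degree V E \<longrightarrow> (\<exists>e\<in>F. v \<in> e))"

lemma fsg_finE: "fin_simple_graph V E \<Longrightarrow> finite E"
  unfolding fin_simple_graph_def by (meson Pow_iff finite_Pow_iff finite_subset subsetI)

lemma deg_le_max: "finite V \<Longrightarrow> v \<in> V \<Longrightarrow> degree E v \<le> max_degree V E"
  unfolding max_degree_def by auto

lemma max_attained: "finite V \<Longrightarrow> V \<noteq> {} \<Longrightarrow> \<exists>v\<in>V. degree E v = max_degree V E"
proof -
  assume a: "finite V" "V \<noteq> {}"
  have "Max (degree E ` V) \<in> degree E ` V" by (rule Max_in) (use a in auto)
  then obtain v where "v\<in>V" "Max (degree E ` V) = degree E v" by blast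
  thus ?thesis unfolding max_degree_def using a by auto
qed

lemma cover_reduce:
  assumes fsg: "fin_simple_graph V E" and md: "max_degree V E = D" and D: "D > 0"
  shows "card F = n \<Longrightarrow> covers V E F \<Longrightarrow> \<exists>F'\<subseteq>F. max_degree V (E - F') = D - 1"
proof (induction n arbitrary: F rule: less_induct)
  case (less n F)
  have fV: "finite V" using fsg unfolding fin_simple_graph_def by blast
  have fE: "finite E" using fsg fsg_finE by blast
  have FE: "F \<subseteq> E" using less.prems covers_def by blast
  have fF: "finite F" using FE fE finite_subset by blast
  show ?case
  proof (cases "\<exists>e\<in>F. covers V E (F-{e})")
    case True
    then obtain e where e: "e\<in>F" "covers V E (F-{e})" by blast
    have "card (F-{e}) < n" using card_Diff1_less[OF fF e(1)] less.prems(1) by simp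
    from less.IH[OF this refl e(2)] obtain F' where "F'\<subseteq>F-{e}" "max_degree V (E - F') = D - 1" by blast
    thus ?thesis by blast
  next
    case False
    have Vne: "V \<noteq> {}" using md D unfolding max_degree_def by auto
    obtain v0 where v0: "v0\<in>V" "degree E v0 = D" using max_attained[OF fV Vne] md by auto
    have cov: "\<forall>v\<in>V. degree E v = D \<longrightarrow> (\<exists>e\<in>F. v\<in>e)" using less.prems covers_def md by metis
    then obtain e0 where e0: "e0\<in>F" "v0\<in>e0" using v0 by blast
    have "\<not> covers V E (F-{e0})" using False e0 by blast
    then obtain v1 where v1: "v1\<in>V" "degree E v1 = D" "\<not>(\<exists>e\<in>F-{e0}. v1\<in>e)"
      using FE md unfolding covers_def by auto
    have v1e0: "v1 \<in> e0" using cov v1 by blast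
    have s1: "{e\<in>E-F. v1\<in>e} = {e\<in>E. v1\<in>e} - {e0}" using v1 e0 v1e0 FE by blast
    have fin: "\<And>v. finite {e\<in>E. v\<in>e}" using fE by auto
    have d1: "degree (E-F) v1 = D - 1" unfolding degree_def s1
      using card_Diff_singleton[of e0 "{e\<in>E. v1\<in>e}"] v1(2) e0 v1e0 FE unfolding degree_def by auto
    have dle: "degree (E-F) v \<le> D - 1" if v: "v\<in>V" for v
    proof (cases "degree E v = D")
      case True
      then obtain e where e: "e\<in>F" "v\<in>e" using cov v by blast
      have "{e\<in>E-F. v\<in>e} \<subseteq> {e\<in>E. v\<in>e} - {e}" using e by blast
      hence "card {e\<in>E-F. v\<in>e} \<le> card ({e\<in>E. v\<in>e} - {e})" using fin card_mono by (metis finite_Diff)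
      also have "\<dots> = D - 1" using card_Diff_singleton[of e "{e\<in>E. v\<in>e}"] True e FE unfolding degree_def by auto
      finally show ?thesis unfolding degree_def .
    next
      case False
      have "degree E v \<le> D" using deg_le_max[OF fV v, of E] md by simp
      moreover have "degree (E-F) v \<le> degree E v" unfolding degree_def
        by (rule card_mono[OF fin]) blast
      ultimately show ?thesis using False by linarith
    qed
    have "Max (degree (E-F) ` V) = D - 1"
    proof (rule Max_eqI)
      show "finite (degree (E-F) ` V)" using fV by simp
      fix y assume "y \<in> degree (E-F) ` V"
      then show "y \<le> D - 1" using dle by auto
    next
      show "D - 1 \<in> degree (E-F) ` V" using v1(1) d1 by (metis image_eqI)
    qed
    hence "max_degree V (E-F) = D - 1" unfolding max_degree_def using Vne by simp
    thus ?thesis by blast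
  qed
qed

lemma es_le_cover:
  assumes fsg: "fin_simple_graph V E" and md: "max_degree V E = D" and D: "D > 0"
    and c: "covers V E F"
  shows "es_Delta V E \<le> card F"
proof -
  obtain F' where F': "F'\<subseteq>F" "max_degree V (E - F') = D - 1"
    using cover_reduce[OF fsg md D refl c] by blast
  have FE: "F \<subseteq> E" using c covers_def by blast
  have fF: "finite F" using FE fsg_finE[OF fsg] finite_subset by blast
  have "es_Delta V E \<le> card F'" unfolding es_Delta_def
    by (rule Least_le) (use F' FE md in blast)
  also have "\<dots> \<le> card F" using card_mono[OF fF F'(1)] .
  finally show ?thesis .
qed

lemma es_cover:
  assumes fsg: "fin_simple_graph V E" and md: "max_degree V E = D" and D: "D > 0"
  shows "\<exists>F. covers V E F \<and> card F = es_Delta V E"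
proof -
  have fV: "finite V" using fsg unfolding fin_simple_graph_def by blast
  have fE: "finite E" using fsg fsg_finE by blast
  have "covers V E E" unfolding covers_def
  proof (intro conjI ballI impI)
    fix v assume "v\<in>V" "degree E v = max_degree V E"
    hence "card {e\<in>E. v\<in>e} \<noteq> 0" using md D unfolding degree_def by simp
    thus "\<exists>e\<in>E. v\<in>e" by (metis (no_types, lifting) card.empty empty_Collect_eq)
  qed simp
  then obtain F' where F': "F'\<subseteq>E" "max_degree V (E - F') = D - 1"
    using cover_reduce[OF fsg md D refl] by blast
  then have ex: "\<exists>k F. F \<subseteq> E \<and> card F = k \<and> max_degree V (E - F) = max_degree V E - 1"
    using md by blast
  obtain F where F: "F \<subseteq> E" "card F = es_Delta V E" "max_degree V (E - F) = max_degree V E - 1"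
    using LeastI_ex[OF ex] unfolding es_Delta_def by blast
  have "covers V E F" unfolding covers_def
  proof (intro conjI ballI impI)
    fix v assume v: "v\<in>V" "degree E v = max_degree V E"
    show "\<exists>e\<in>F. v\<in>e"
    proof (rule ccontr)
      assume "\<not> (\<exists>e\<in>F. v\<in>e)"
      hence "{e\<in>E-F. v\<in>e} = {e\<in>E. v\<in>e}" by blast
      hence "degree (E-F) v = D" using v md unfolding degree_def by simp
      moreover have "degree (E-F) v \<le> D - 1" using deg_le_max[OF fV v(1), of "E-F"] F(3) md by simp
      ultimately show False using D by linarith
    qed
  qed (use F in blast)
  thus ?thesis using F by blast
qed


lemma deg_img:
  assumes eV: "\<forall>e\<in>E. e \<subseteq> V" and inj: "inj_on f V" and v: "v \<in> V"
  shows "degree ((`) f ` E) (f v) = degree E v"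
proof -
  have "{e'\<in>(`) f ` E. f v \<in> e'} = (`) f ` {e\<in>E. v\<in>e}"
  proof (intro equalityI subsetI)
    fix e' assume "e' \<in> {e'\<in>(`) f ` E. f v \<in> e'}"
    then obtain e where e: "e\<in>E" "e' = f ` e" "f v \<in> f ` e" by blast
    hence "v \<in> e" using eV inj v by (auto simp: inj_on_image_mem_iff)
    thus "e' \<in> (`) f ` {e\<in>E. v\<in>e}" using e by blast
  qed auto
  moreover have "inj_on ((`) f) {e\<in>E. v\<in>e}"
    by (rule inj_onI) (use eV inj in \<open>auto simp: inj_on_image_eq_iff\<close>)
  ultimately show ?thesis unfolding degree_def by (simp add: card_image)
qed

lemma img_props:
  assumes fsg: "fin_simple_graph V E" and inj: "inj_on f V"
  shows "fin_simple_graph (f`V) ((`) f ` E)"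
    and "max_degree (f`V) ((`) f ` E) = max_degree V E"
    and "card (f`V) = card V"
proof -
  have eV: "\<forall>e\<in>E. e \<subseteq> V" using fsg unfolding fin_simple_graph_def by blast
  show "fin_simple_graph (f`V) ((`) f ` E)" using fsg inj unfolding fin_simple_graph_def
    by (auto simp: card_image inj_on_subset)
  have "degree ((`) f ` E) ` f ` V = degree E ` V"
    using deg_img[OF eV inj] by (force simp: image_comp)
  thus "max_degree (f`V) ((`) f ` E) = max_degree V E" unfolding max_degree_def by simp
  show "card (f`V) = card V" using inj card_image by blast
qed

lemma es_img:
  assumes fsg: "fin_simple_graph V E" and inj: "inj_on f V" and md: "max_degree V E = D" and D: "D > 0"
  shows "es_Delta V E \<le> es_Delta (f`V) ((`) f ` E)"
proof -
  have eV: "\<forall>e\<in>E. e \<subseteq> V" using fsg unfolding fin_simple_graph_def by blast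
  note P = img_props[OF fsg inj]
  obtain F' where F': "covers (f`V) ((`) f ` E) F'" "card F' = es_Delta (f`V) ((`) f ` E)"
    using es_cover[OF P(1) P(2)[unfolded md] D] by blast
  define F where "F = {e\<in>E. f ` e \<in> F'}"
  have "covers V E F" unfolding covers_def
  proof (intro conjI ballI impI)
    fix v assume v: "v\<in>V" "degree E v = max_degree V E"
    hence "degree ((`) f ` E) (f v) = max_degree (f`V) ((`) f ` E)"
      using deg_img[OF eV inj v(1)] P(2) by simp
    then obtain e' where e': "e'\<in>F'" "f v \<in> e'" using F'(1) v(1) unfolding covers_def by blast
    then obtain e where e: "e\<in>E" "e' = f ` e" using F'(1) unfolding covers_def by blast
    have "v \<in> e" using e e' eV inj v(1) by (auto simp: inj_on_image_mem_iff)
    thus "\<exists>e\<in>F. v\<in>e" using e e' F_def by blast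
  qed (simp add: F_def)
  hence "es_Delta V E \<le> card F" using es_le_cover[OF fsg md D] by blast
  also have "card F \<le> card F'"
  proof -
    have "inj_on ((`) f) F"
      by (rule inj_onI) (use eV inj in \<open>auto simp: F_def inj_on_image_eq_iff\<close>)
    moreover have "(`) f ` F \<subseteq> F'" unfolding F_def by blast
    moreover have "finite F'" using F'(1) fsg_finE[OF P(1)] finite_subset unfolding covers_def by blast
    ultimately show ?thesis by (metis card_image card_mono)
  qed
  finally show ?thesis using F'(2) by simp
qed


definition dup :: "nat \<Rightarrow> nat \<Rightarrow> nat" where "dup b x = 2*x+b"

definition V2 :: "nat set \<Rightarrow> nat set" where "V2 V = dup 0 ` V \<union> dup 1 ` V"

definition E2 :: "nat \<Rightarrow> nat set \<Rightarrow> nat set set \<Rightarrow> nat set set" where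
  "E2 D V E = (`) (dup 0) ` E \<union> (`) (dup 1) ` E \<union> (\<lambda>v. {2*v, 2*v+1}) ` {v\<in>V. degree E v < D}"

lemma dup_eq: "b < 2 \<Longrightarrow> b' < 2 \<Longrightarrow> dup b x = dup b' y \<longleftrightarrow> b = b' \<and> x = y"
  unfolding dup_def by presburger

lemma inj_dup: "b < 2 \<Longrightarrow> inj (dup b)"
  using dup_eq by (meson injI)

lemma dup_mem: "b < 2 \<Longrightarrow> b' < 2 \<Longrightarrow> dup b v \<in> dup b' ` e \<longleftrightarrow> b = b' \<and> v \<in> e"
proof -
  assume b: "b < 2" "b' < 2"
  have "dup b v \<in> dup b' ` e \<longleftrightarrow> (\<exists>x\<in>e. dup b v = dup b' x)" by blast
  also have "\<dots> \<longleftrightarrow> (\<exists>x\<in>e. b = b' \<and> v = x)" using dup_eq[OF b] by simp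
  also have "\<dots> \<longleftrightarrow> b = b' \<and> v \<in> e" by blast
  finally show ?thesis .
qed

lemma pair_not_img: "b < 2 \<Longrightarrow> {2*v, 2*v+1} \<noteq> dup b ` e"
proof
  assume b: "b<2" and h: "{2*v, 2*v+1} = dup b ` e"
  have "2*v \<in> dup b ` e" "2*v+1 \<in> dup b ` e" using h by auto
  then obtain x y where "2*v = dup b x" "2*v+1 = dup b y" by blast
  thus False using b unfolding dup_def by presburger
qed

lemma dup_pair: "b < 2 \<Longrightarrow> dup b v \<in> {2*u, 2*u+1} \<longleftrightarrow> u = v"
  unfolding dup_def by auto

lemma deg2:
  assumes b: "b < 2" and v: "v \<in> V" and fE: "finite E"
  shows "degree (E2 D V E) (dup b v) = degree E v + (if degree E v < D then 1 else 0)"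
proof -
  have eq: "{e\<in>E2 D V E. dup b v \<in> e} = (`) (dup b) ` {e\<in>E. v\<in>e} \<union> (if degree E v < D then {{2*v,2*v+1}} else {})"
  proof (intro equalityI subsetI)
    fix e' assume "e' \<in> {e\<in>E2 D V E. dup b v \<in> e}"
    then have e': "e' \<in> E2 D V E" "dup b v \<in> e'" by auto
    show "e' \<in> (`) (dup b) ` {e\<in>E. v\<in>e} \<union> (if degree E v < D then {{2*v,2*v+1}} else {})"
    proof -
      consider (a) e where "e\<in>E" "e' = dup 0 ` e" | (c) e where "e\<in>E" "e' = dup 1 ` e"
        | (d) u where "u\<in>V" "degree E u < D" "e' = {2*u, 2*u+1}"
        using e'(1) unfolding E2_def by blast
      thus ?thesis
      proof cases
        case a thus ?thesis using e'(2) b dup_mem[of b 0 v e] by auto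
      next
        case c thus ?thesis using e'(2) b dup_mem[of b 1 v e] by auto
      next
        case d thus ?thesis using e'(2) b dup_pair[of b v u] by auto
      qed
    qed
  next
    fix e' assume e': "e' \<in> (`) (dup b) ` {e\<in>E. v\<in>e} \<union> (if degree E v < D then {{2*v,2*v+1}} else {})"
    show "e' \<in> {e\<in>E2 D V E. dup b v \<in> e}"
    proof (cases "e' \<in> (`) (dup b) ` {e\<in>E. v\<in>e}")
      case True
      then obtain e where "e\<in>E" "v\<in>e" "e' = dup b ` e" by blast
      moreover have "b = 0 \<or> b = 1" using b by auto
      ultimately show ?thesis unfolding E2_def by auto
    next
      case False
      hence "degree E v < D" "e' = {2*v,2*v+1}" using e' by (auto split: if_splits)
      thus ?thesis unfolding E2_def using v b dup_pair[of b v v] by auto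
    qed
  qed
  have fin: "finite ((`) (dup b) ` {e\<in>E. v\<in>e})" using fE by auto
  have disj: "(`) (dup b) ` {e\<in>E. v\<in>e} \<inter> (if degree E v < D then {{2*v,2*v+1}} else {}) = {}"
    using pair_not_img[OF b, of v] by auto
  have ci: "card ((`) (dup b) ` {e\<in>E. v\<in>e}) = degree E v"
    unfolding degree_def
    by (rule card_image) (meson inj_dup[OF b] inj_on_image_eq_iff inj_on_subset subset_UNIV inj_onI)
  show ?thesis unfolding degree_def[of "E2 D V E"] eq
    by (subst card_Un_disjoint[OF fin _ disj]) (auto simp: ci)
qed


lemma V2_cases: "w \<in> V2 V \<Longrightarrow> \<exists>b<2. \<exists>v\<in>V. w = dup b v"
proof -
  assume w: "w \<in> V2 V"
  have "(0::nat) < 2" "(1::nat) < 2" by simp_all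
  thus ?thesis using w unfolding V2_def by blast
qed

lemma card_V2: "finite V \<Longrightarrow> card (V2 V) = 2 * card V"
proof -
  assume f: "finite V"
  have "dup 0 ` V \<inter> dup 1 ` V = {}" using dup_eq[of 0 1] by auto
  moreover have "card (dup b ` V) = card V" if "b<2" for b
    using inj_dup[OF that] by (simp add: card_image inj_on_subset)
  ultimately show ?thesis unfolding V2_def using f
    by (subst card_Un_disjoint) auto
qed

lemma nat_case:
  fixes D :: nat and c :: real
  assumes D: "D > 0"
    and hyp: "\<And>(W :: nat set) (F :: nat set set).
               fin_simple_graph W F \<Longrightarrow> regular D W F \<Longrightarrow>
               real (es_Delta W F) \<le> c * real (card W)"
  shows "fin_simple_graph V E \<Longrightarrow> max_degree V E = D \<Longrightarrow> (\<forall>v\<in>V. D - j \<le> degree E v)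
     \<Longrightarrow> real (es_Delta V E) \<le> c * real (card (V :: nat set))"
proof (induction j arbitrary: V E)
  case 0
  have fV: "finite V" using "0.prems" unfolding fin_simple_graph_def by blast
  have "regular D V E" unfolding regular_def
    using "0.prems" deg_le_max[OF fV] by (metis diff_zero le_antisym)
  thus ?case using hyp "0.prems"(1) by blast
next
  case (Suc j)
  have fV: "finite V" using Suc.prems unfolding fin_simple_graph_def by blast
  have fE: "finite E" using Suc.prems fsg_finE by blast
  have eV: "\<forall>e\<in>E. e \<subseteq> V \<and> card e = 2" using Suc.prems unfolding fin_simple_graph_def by blast
  have Vne: "V \<noteq> {}" using Suc.prems D unfolding max_degree_def by auto
  have dleD: "degree E v \<le> D" if "v\<in>V" for v using deg_le_max[OF fV that, of E] Suc.prems by simp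
  let ?V = "V2 V" and ?E = "E2 D V E"
  have d2: "degree ?E w = degree E v + (if degree E v < D then 1 else 0)" if "b<2" "v\<in>V" "w = dup b v" for w b v
    using deg2[OF that(1,2) fE] that(3) by simp
  have fsg2: "fin_simple_graph ?V ?E" unfolding fin_simple_graph_def
  proof (rule conjI[OF _ ballI])
    show "finite ?V" using fV unfolding V2_def by auto
  next
    fix e' assume "e' \<in> ?E"
    then consider (a) e where "e\<in>E" "e' = dup 0 ` e" | (c) e where "e\<in>E" "e' = dup 1 ` e"
        | (d) u where "u\<in>V" "e' = {2*u, 2*u+1}"
      unfolding E2_def by blast
    thus "e' \<subseteq> ?V \<and> card e' = 2"
    proof cases
      case a thus ?thesis using eV inj_dup[of 0] unfolding V2_def
        by (auto simp: card_image inj_on_subset)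
    next
      case c thus ?thesis using eV inj_dup[of 1] unfolding V2_def
        by (auto simp: card_image inj_on_subset)
    next
      case d
      have "2*u = dup 0 u" "2*u+1 = dup 1 u" unfolding dup_def by auto
      thus ?thesis using d unfolding V2_def by auto
    qed
  qed
  have fV2: "finite ?V" using fsg2 unfolding fin_simple_graph_def by blast
  have dle2: "degree ?E w \<le> D \<and> D - j \<le> degree ?E w" if wV: "w \<in> ?V" for w
  proof -
    obtain b v where bv: "b<2" "v\<in>V" "w = dup b v" using V2_cases[OF wV] by blast
    show ?thesis using d2[OF bv] dleD[OF bv(2)] Suc.prems(3) bv(2) by auto
  qed
  obtain v0 where v0: "v0 \<in> V" "degree E v0 = D" using max_attained[OF fV Vne] Suc.prems by auto
  have "degree ?E (dup 0 v0) = D" using d2[of 0 v0] v0 by simp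
  moreover have "dup 0 v0 \<in> ?V" using v0 unfolding V2_def by auto
  ultimately have md2: "max_degree ?V ?E = D" unfolding max_degree_def
    using fV2 dle2 by (auto intro!: Max_eqI intro: image_eqI[of _ _ "dup 0 v0"])
  have IH: "real (es_Delta ?V ?E) \<le> c * real (card ?V)"
    using Suc.IH[OF fsg2 md2] dle2 by blast
  obtain F' where F': "covers ?V ?E F'" "card F' = es_Delta ?V ?E"
    using es_cover[OF fsg2 md2 D] by blast
  define F where "F b = {e\<in>E. dup b ` e \<in> F'}" for b
  have cov: "covers V E (F b)" if b: "b<2" for b unfolding covers_def
  proof (intro conjI ballI impI)
    fix v assume v: "v\<in>V" "degree E v = max_degree V E"
    hence "degree ?E (dup b v) = max_degree ?V ?E" using d2[OF b v(1)] Suc.prems md2 by simp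
    moreover have "dup b v \<in> ?V" proof -
      have "b = 0 \<or> b = 1" using b by auto
      thus ?thesis using v unfolding V2_def by auto
    qed
    ultimately obtain e' where e': "e'\<in>F'" "dup b v \<in> e'" using F'(1) unfolding covers_def by blast
    have "e' \<in> ?E" using e' F'(1) unfolding covers_def by blast
    then consider (a) e where "e\<in>E" "e' = dup 0 ` e" | (c) e where "e\<in>E" "e' = dup 1 ` e"
        | (d) u where "u\<in>V" "degree E u < D" "e' = {2*u, 2*u+1}"
      unfolding E2_def by blast
    thus "\<exists>e\<in>F b. v\<in>e"
    proof cases
      case a thus ?thesis using e' b dup_mem[of b 0 v e] unfolding F_def by auto
    next
      case c thus ?thesis using e' b dup_mem[of b 1 v e] unfolding F_def by auto
    next
      case d thus ?thesis using e' b dup_pair[of b v u] v Suc.prems(2) by auto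
    qed
  qed (auto simp: F_def)
  have es_le: "es_Delta V E \<le> card (F b)" if "b<2" for b
    using es_le_cover[OF Suc.prems(1,2) D cov[OF that]] .
  have "card (F 0) + card (F 1) \<le> card F'"
  proof -
    have ne: "e \<noteq> {}" if "e\<in>E" for e using eV that by fastforce
    have inj: "inj_on ((`) (dup b)) (F b)" if "b<2" for b
      by (meson inj_dup[OF that] inj_on_image_eq_iff inj_on_subset subset_UNIV inj_onI)
    have fF: "finite (F b)" for b using fE unfolding F_def by auto
    have disj: "(`) (dup 0) ` F 0 \<inter> (`) (dup 1) ` F 1 = {}"
    proof (rule ccontr)
      assume "\<not> ?thesis"
      then obtain e1 e2 where e: "e1 \<in> F 0" "e2 \<in> F 1" "dup 0 ` e1 = dup 1 ` e2" by blast
      obtain x where "x \<in> e1" using ne e(1) unfolding F_def by blast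
      hence "dup 0 x \<in> dup 1 ` e2" using e(3) by blast
      thus False using dup_mem[of 0 1] by auto
    qed
    have "card (F 0) + card (F 1) = card ((`) (dup 0) ` F 0 \<union> (`) (dup 1) ` F 1)"
      using card_Un_disjoint[OF _ _ disj] fF card_image[OF inj] by simp
    also have "\<dots> \<le> card F'"
      by (rule card_mono) (use F'(1) fsg_finE[OF fsg2] finite_subset in \<open>auto simp: covers_def F_def\<close>)
    finally show ?thesis .
  qed
  hence "2 * es_Delta V E \<le> es_Delta ?V ?E" using es_le[of 0] es_le[of 1] F'(2) by linarith
  hence "real (2 * es_Delta V E) \<le> real (es_Delta ?V ?E)" by (simp only: of_nat_le_iff)
  hence "2 * real (es_Delta V E) \<le> c * real (card ?V)" using IH by simp
  hence "2 * real (es_Delta V E) \<le> c * (2 * real (card V))" using card_V2[OF fV] by simp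
  thus ?case by linarith
qed

theorem theorem3p2:
  fixes \<Delta> :: nat and c :: real and V :: "'a set" and E :: "'a set set"
  assumes "\<Delta> > 0" and "0 < c" and "c < 1"
    and hyp: "\<And>(W :: nat set) (F :: nat set set).
               fin_simple_graph W F \<Longrightarrow> regular \<Delta> W F \<Longrightarrow>
               real (es_Delta W F) \<le> c * real (card W)"
    and "fin_simple_graph V E" and "max_degree V E = \<Delta>"
  shows "real (es_Delta V E) \<le> c * real (card V)"
proof -
  have fV: "finite V" using assms(5) unfolding fin_simple_graph_def by blast
  obtain f :: "'a \<Rightarrow> nat" where inj: "inj_on f V"
    using finite_imp_inj_to_nat_seg[OF fV] by blast
  note P = img_props[OF assms(5) inj]
  have "real (es_Delta (f`V) ((`) f ` E)) \<le> c * real (card (f`V))"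
  proof (rule nat_case[where D=\<Delta> and j=\<Delta>])
    show "0 < \<Delta>" using assms(1) .
    show "fin_simple_graph (f ` V) ((`) f ` E)" using P(1) .
    show "max_degree (f ` V) ((`) f ` E) = \<Delta>" using P(2) assms(6) by simp
    show "\<forall>v\<in>f ` V. \<Delta> - \<Delta> \<le> degree ((`) f ` E) v" by simp
  qed (rule hyp)
  moreover have "es_Delta V E \<le> es_Delta (f`V) ((`) f ` E)"
    using es_img[OF assms(5) inj assms(6,1)] .
  ultimately have "real (es_Delta V E) \<le> c * real (card (f`V))" 
    by (meson order_trans of_nat_le_iff)
  thus ?thesis using P(3) by simp
qed

end
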